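(* Let $K\in\mathbb{N}$, $\mathcal{X}=[0,1]^K$, and let $p,q$ be two probability density functions supported on $\mathcal{X}$ with finite differential entropies $h(p),h(q)$. Let $\varepsilon,A>0$ and assume that for all $\mathbf{x}\in\mathcal{X}$ we have $|p(\mathbf{x})-q(\mathbf{x})|\le\varepsilon$ and $0\le p(\mathbf{x})\le A$, and that $\frac{\varepsilon}{A}\le\alpha$, where $\alpha:=\frac{\sqrt{e^2+4}-e}{2e}$. Then \[ |h(p)-h(q)|\le\varepsilon\log\frac{A}{\varepsilon}. \]
   Context: $h(p)=-\int p\log p\,\mathrm{d}\lambda^K$ denotes differential entropy. *)

theory Defs
  imports "HOL-Analysis.Analysis"
begin

text \<open>The unit cube [0,1]^K inside real^'n (K = CARD('n)).\<close>
definition unit_cube :: "(real ^ 'n) set" where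
  "unit_cube = {x. \<forall>i. 0 \<le> x $ i \<and> x $ i \<le> 1}"

definition is_pdf_on_cube :: "(real ^ 'n \<Rightarrow> real) \<Rightarrow> bool" where
  "is_pdf_on_cube p \<longleftrightarrow>
     p \<in> borel_measurable lborel \<and> (\<forall>x. 0 \<le> p x) \<and>
     integrable lborel p \<and> (LINT x|lborel. p x) = 1 \<and>
     (\<forall>x. x \<notin> unit_cube \<longrightarrow> p x = 0)"

text \<open>Differential entropy h(p) = - \<integral> p ln p (natural log; 0 ln 0 = 0 since ln 0 = 0).\<close>
definition diff_entropy :: "(real ^ 'n \<Rightarrow> real) \<Rightarrow> real" where
  "diff_entropy p = - (LINT x|lborel. p x * ln (p x))"

definition has_finite_entropy :: "(real ^ 'n \<Rightarrow> real) \<Rightarrow> bool" where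
  "has_finite_entropy p \<longleftrightarrow> integrable lborel (\<lambda>x. p x * ln (p x))"

end

theory Submission
  imports Defs
begin

lemma key_ord:
  fixes a b \<delta> :: real
  assumes a0: "0 \<le> a" and ab: "a \<le> b" and d: "b - a \<le> \<delta>" and b1: "b \<le> 1 + \<delta>"
    and \<delta>0: "0 < \<delta>" and l2: "ln \<delta> \<le> -2" and \<delta>1: "\<delta> \<le> 1"
  shows "\<bar>b * ln b - a * ln a\<bar> \<le> - \<delta> * ln \<delta>"
proof -
  define d where "d = b - a"
  have d0: "0 \<le> d" using ab d_def by simp
  have lower: "a * ln a - b * ln b \<le> - \<delta> * ln \<delta>"
  proof (cases "d = 0")
    case True
    then have "a = b" using d_def by simp
    have "\<delta> * ln \<delta> \<le> 0" using \<delta>0 l2 \<delta>1 by (intro mult_nonneg_nonpos) auto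
    then show ?thesis using \<open>a = b\<close> by simp
  next
    case False
    then have dp: "0 < d" using d0 by simp
    have bp: "0 < b" using dp d_def a0 by simp
    have "a * ln a \<le> a * ln b"
    proof (cases "a = 0")
      case False
      then have "ln a \<le> ln b" using a0 ab by simp
      then show ?thesis using a0 by (simp add: mult_left_mono)
    qed simp
    moreover have "b * ln b = a * ln b + d * ln b" unfolding d_def by (simp add: algebra_simps)
    ultimately have s1: "a * ln a - b * ln b \<le> - d * ln b" by simp
    have "ln d \<le> ln b" using dp d_def a0 by simp
    then have s2: "- d * ln b \<le> - d * ln d" using dp by (simp add: mult_left_mono)
    have "ln (\<delta> / d) \<le> \<delta> / d - 1" using ln_le_minus_one[of "\<delta>/d"] dp \<delta>0 by simp
    then have "ln \<delta> - ln d \<le> \<delta> / d - 1" using ln_div[of \<delta> d] dp \<delta>0 by simp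
    then have "d * (ln \<delta> - ln d) \<le> d * (\<delta> / d - 1)" using dp by (simp add: mult_left_mono)
    then have s3: "d * ln d \<ge> d * (ln \<delta> + 1) - \<delta>" using dp by (simp add: algebra_simps)
    have "d \<le> \<delta>" using d d_def by simp
    then have "d * (ln \<delta> + 1) \<ge> \<delta> * (ln \<delta> + 1)" using l2 by (intro mult_right_mono_neg) auto
    with s3 have "d * ln d \<ge> \<delta> * ln \<delta>" by (simp add: algebra_simps)
    with s1 s2 show ?thesis by simp
  qed
  have upper: "b * ln b - a * ln a \<le> - \<delta> * ln \<delta>"
  proof (cases "b = 0")
    case True
    then have "a = 0" using a0 ab by simp
    have "\<delta> * ln \<delta> \<le> 0" using \<delta>0 l2 \<delta>1 by (intro mult_nonneg_nonpos) auto
    then show ?thesis using True \<open>a = 0\<close> by simp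
  next
    case False
    then have bp: "0 < b" using a0 ab by simp
    have "a * ln a \<ge> a * ln b + a - b"
    proof (cases "a = 0")
      case True then show ?thesis using bp by simp
    next
      case False
      then have ap: "0 < a" using a0 by simp
      have "ln (b / a) \<le> b / a - 1" using ln_le_minus_one[of "b/a"] ap bp by simp
      then have "ln b - ln a \<le> b / a - 1" using ln_div[of b a] ap bp by simp
      then have "a * (ln b - ln a) \<le> a * (b / a - 1)" using ap by (simp add: mult_left_mono)
      then show ?thesis using ap by (simp add: algebra_simps)
    qed
    moreover have "b * ln b = a * ln b + d * ln b" unfolding d_def by (simp add: algebra_simps)
    ultimately have s1: "b * ln b - a * ln a \<le> d * (1 + ln b)" unfolding d_def by (simp add: algebra_simps)
    have "ln b \<le> b - 1" using ln_le_minus_one bp by simp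
    then have "1 + ln b \<le> 1 + \<delta>" using b1 by simp
    then have "d * (1 + ln b) \<le> d * (1 + \<delta>)" using d0 by (simp add: mult_left_mono)
    also have "\<dots> \<le> \<delta> * (1 + \<delta>)" using d d_def \<delta>0 by (intro mult_right_mono) auto
    also have "\<dots> \<le> \<delta> * (- ln \<delta>)" using \<delta>0 \<delta>1 l2 by (intro mult_left_mono) auto
    finally show ?thesis using s1 by simp
  qed
  show ?thesis using lower upper by simp
qed

lemma key:
  fixes u v \<delta> :: real
  assumes "0 \<le> u" "u \<le> 1" "0 \<le> v" "\<bar>u - v\<bar> \<le> \<delta>"
    and "0 < \<delta>" "ln \<delta> \<le> -2" "\<delta> \<le> 1"
  shows "\<bar>u * ln u - v * ln v\<bar> \<le> - \<delta> * ln \<delta>"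
proof (cases "u \<le> v")
  case True
  then show ?thesis using key_ord[of u v \<delta>] assms by (simp add: abs_minus_commute)
next
  case False
  then show ?thesis using key_ord[of v u \<delta>] assms by simp
qed

lemma alpha_bound: "(sqrt (exp 1 ^ 2 + 4) - exp 1) / (2 * exp 1) \<le> 1 / exp 1 ^ 2"
proof -
  define e where "e = exp (1::real)"
  have e0: "e > 0" using e_def by simp
  have "e ^ 2 + 4 \<le> (e + 2 / e) ^ 2" using e0 by (simp add: power2_eq_square field_simps)
  then have "sqrt (e ^ 2 + 4) \<le> sqrt ((e + 2 / e) ^ 2)" by (rule real_sqrt_le_mono)
  also have "\<dots> = e + 2 / e" using e0 by simp
  finally have "sqrt (e ^ 2 + 4) - e \<le> 2 / e" by simp
  then have "(sqrt (e ^ 2 + 4) - e) / (2 * e) \<le> (2 / e) / (2 * e)" using e0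
    by (intro divide_right_mono) auto
  also have "\<dots> = 1 / e ^ 2" using e0 by (simp add: power2_eq_square field_simps)
  finally show ?thesis using e_def by simp
qed

lemma cube_measure: "measure lborel (unit_cube :: (real ^ 'n) set) = 1"
  and cube_cbox: "(unit_cube :: (real ^ 'n) set) = cbox 0 (\<chi> i. 1)"
proof -
  show c: "(unit_cube :: (real ^ 'n) set) = cbox 0 (\<chi> i. 1)"
    by (auto simp: unit_cube_def mem_box_cart)
  have "(0::real^'n) \<in> cbox 0 (\<chi> i. 1)" by (simp add: mem_box_cart)
  then have "cbox (0::real^'n) (\<chi> i. 1) \<noteq> {}" by blast
  then show "measure lborel (unit_cube :: (real ^ 'n) set) = 1"
    unfolding c by (simp add: content_cbox_cart)
qed

theorem lemma6:
  fixes p q :: "real ^ 'n \<Rightarrow> real" and \<epsilon> A :: real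
  assumes "is_pdf_on_cube p" and "is_pdf_on_cube q"
    and "has_finite_entropy p" and "has_finite_entropy q"
    and "\<epsilon> > 0" and "A > 0"
    and "\<forall>x\<in>unit_cube. \<bar>p x - q x\<bar> \<le> \<epsilon>"
    and "\<forall>x\<in>unit_cube. 0 \<le> p x \<and> p x \<le> A"
    and "\<epsilon> / A \<le> (sqrt (exp 1 ^ 2 + 4) - exp 1) / (2 * exp 1)"
  shows "\<bar>diff_entropy p - diff_entropy q\<bar> \<le> \<epsilon> * ln (A / \<epsilon>)"
proof -
  note P = assms(1)[unfolded is_pdf_on_cube_def]
  note Q = assms(2)[unfolded is_pdf_on_cube_def]
  define \<delta> where "\<delta> = \<epsilon> / A"
  have \<delta>0: "0 < \<delta>" using assms(5,6) \<delta>_def by simp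
  have \<delta>e: "\<delta> \<le> 1 / exp 1 ^ 2" using assms(9) alpha_bound \<delta>_def by linarith
  have "ln \<delta> \<le> ln (1 / exp 1 ^ 2)" using \<delta>0 \<delta>e by simp
  also have "\<dots> = -2" by (simp add: ln_div ln_realpow)
  finally have l2: "ln \<delta> \<le> -2" .
  have "1 / exp (1::real) ^ 2 \<le> 1" by simp
  then have \<delta>1: "\<delta> \<le> 1" using \<delta>e by linarith
  define C where "C = \<epsilon> * ln (A / \<epsilon>)"
  have CA: "C = A * (- \<delta> * ln \<delta>)"
    using assms(5,6) by (simp add: C_def \<delta>_def ln_div algebra_simps)
  define F where "F x = p x * ln (p x) - q x * ln (q x) - ln A * (p x - q x)" for x
  have pt: "\<bar>F x\<bar> \<le> C * indicator unit_cube x" for x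
  proof (cases "x \<in> unit_cube")
    case False
    then show ?thesis using P Q by (simp add: F_def)
  next
    case True
    define u where "u = p x / A"
    define v where "v = q x / A"
    have u0: "0 \<le> u" and u1: "u \<le> 1" using True assms(6,8) u_def by auto
    have v0: "0 \<le> v" using Q assms(6) v_def by simp
    have "\<bar>u - v\<bar> = \<bar>p x - q x\<bar> / A" using assms(6) u_def v_def
      by (simp add: diff_divide_distrib[symmetric])
    also have "\<dots> \<le> \<delta>" using True assms(6,7) \<delta>_def by (simp add: divide_right_mono)
    finally have uv: "\<bar>u - v\<bar> \<le> \<delta>" .
    have k: "\<bar>u * ln u - v * ln v\<bar> \<le> - \<delta> * ln \<delta>" using key[OF u0 u1 v0 uv \<delta>0 l2 \<delta>1] .
    have tr: "t * ln t - ln A * t = A * ((t / A) * ln (t / A))" if "0 \<le> t" for t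
    proof (cases "t = 0")
      case False
      then have "0 < t" using that by simp
      then show ?thesis using assms(6) by (simp add: ln_div algebra_simps)
    qed simp
    have "F x = A * (u * ln u - v * ln v)"
      unfolding F_def u_def v_def using tr[of "p x"] tr[of "q x"] P Q
      by (simp add: algebra_simps)
    then have "\<bar>F x\<bar> = A * \<bar>u * ln u - v * ln v\<bar>" using assms(6) by (simp add: abs_mult)
    also have "\<dots> \<le> A * (- \<delta> * ln \<delta>)" using mult_left_mono[OF k, of A] assms(6) by simp
    finally show ?thesis using True CA by simp
  qed
  have ip: "integrable lborel (\<lambda>x. p x * ln (p x))" using assms(3) has_finite_entropy_def by auto
  have iq: "integrable lborel (\<lambda>x. q x * ln (q x))" using assms(4) has_finite_entropy_def by auto
  have iF: "integrable lborel F" unfolding F_def using ip iq P Q by auto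
  have "integral\<^sup>L lborel F = (LINT x|lborel. p x * ln (p x)) - (LINT x|lborel. q x * ln (q x))
       - ln A * ((LINT x|lborel. p x) - (LINT x|lborel. q x))"
    unfolding F_def using ip iq P Q by simp
  then have eq: "diff_entropy p - diff_entropy q = - integral\<^sup>L lborel F"
    using P Q by (simp add: diff_entropy_def)
  have ii: "integrable lborel (\<lambda>x::real^'n. C * indicator unit_cube x :: real)"
    unfolding cube_cbox by (intro integrable_mult_right integrable_real_indicator emeasure_lborel_cbox_finite) auto
  have "\<bar>integral\<^sup>L lborel F\<bar> \<le> (LINT x|lborel. C * indicator unit_cube (x::real^'n))"
    by (rule integral_abs_bound_integral[OF iF ii]) (rule pt)
  also have "\<dots> = C" using cube_measure[where 'n='n] by simp
  finally show ?thesis using eq C_def by simp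
qed

end
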